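(* For every $n\ge2$, $$E\big[(U^{(n)}-\tau^{(n)})^2\big]=\frac{4n+2}{n-1}H_{n,2}-\frac{2H_{n,1}^2}{n-1}-\frac{4H_{n,1}}{n-1}.$$
   Context: Fix $n\ge 2$. A Yule tree with speciation rate 1 on $n$ tips: start with a single lineage; each lineage independently splits into two at rate 1; the process is stopped just before the $n$-th speciation event, so the tree has $n$ tips and $n-1$ speciation (internal) nodes, numbered $1,\dots,n-1$ chronologically from the root. For $i=1,\dots,n$ let $T_i$ be the length of the time interval during which there are exactly $i$ lineages; the $T_i$ are independent, $T_i\sim\mathrm{Exp}(i)$ (rate $i$), the $k$-th speciation occurs at time $T_1+\dots+T_k$, and at each speciation the splitting lineage is uniformly chosen among current lineages, independently of the $T_i$. The tree height is $U^{(n)}=T_1+\dots+T_n$. Choose an unordered pair of distinct tips uniformly at random and let $\kappa_n\in\{1,\dots,n-1\}$ be the index of the speciation event at which their lineages split; the coalescent time of the pair is $\tau^{(n)}=T_{\kappa_n+1}+\dots+T_n$. $H_{n,r}=\sum_{i=1}^n i^{-r}$. *)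

theory Defs
  imports "HOL-Probability.Probability"
begin

definition Hnr :: "nat \<Rightarrow> nat \<Rightarrow> real" where
  "Hnr n r = (\<Sum>i=1..n. 1 / real i ^ r)"

text \<open>Yule tree topology on n tips. Lineages are labelled 0,1,2,...
  At speciation event k (k = 1..n-1) there are k lineages 0..k-1; lineage c k
  (uniform in {0..<k}) splits into lineages c k and k. After n-1 events the tips
  are the lineages 0..n-1.\<close>
definition yule_choices :: "nat \<Rightarrow> (nat \<Rightarrow> nat) set" where
  "yule_choices n = (\<Pi>\<^sub>E k\<in>{1..<n}. {..<k})"

definition tip_pairs :: "nat \<Rightarrow> (nat \<times> nat) set" where
  "tip_pairs n = {(a, b). a < b \<and> b < n}"

text \<open>Index of the speciation event at which the lineages of tips a < b split.
  Lineage b was created at event b from lineage c b; if c b = a this is the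
  split, otherwise the ancestor of b before event b is c b.\<close>
function split_event :: "(nat \<Rightarrow> nat) \<Rightarrow> nat \<Rightarrow> nat \<Rightarrow> nat" where
  "split_event c a b =
     (if a < b then
        (if c b = a then b
         else if c b < b then split_event c (min a (c b)) (max a (c b))
         else 0)
      else 0)"
  by pat_completeness auto
termination
  by (relation "Wellfounded.measure (\<lambda>(c, a, b). b)") auto

definition yule_space :: "nat \<Rightarrow> (((nat \<Rightarrow> nat) \<times> (nat \<times> nat)) \<times> (nat \<Rightarrow> real)) measure" where
  "yule_space n =
     measure_pmf (pmf_of_set (yule_choices n \<times> tip_pairs n))
     \<Otimes>\<^sub>M (\<Pi>\<^sub>M i\<in>{1..n}. density lborel (exponential_density (real i)))"

definition yule_height :: "nat \<Rightarrow> (nat \<Rightarrow> real) \<Rightarrow> real" where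
  "yule_height n T = (\<Sum>i=1..n. T i)"

definition coal_time :: "nat \<Rightarrow> nat \<Rightarrow> (nat \<Rightarrow> real) \<Rightarrow> real" where
  "coal_time n \<kappa> T = (\<Sum>i\<in>{\<kappa><..n}. T i)"

end

theory Submission
  imports Defs
begin

declare split_event.simps[simp del]

lemma split_event_le: "split_event c a b \<le> b"
proof (induction c a b rule: split_event.induct)
  case (1 c a b)
  show ?case
    using 1 by (subst split_event.simps) (auto simp: max_def split: if_splits)
qed

lemma split_event_cong:
  "(\<And>i. i \<le> b \<Longrightarrow> c i = c' i) \<Longrightarrow> split_event c a b = split_event c' a b"
proof (induction c a b rule: split_event.induct)
  case (1 c a b)
  show ?case
    apply (subst (1 2) split_event.simps)
    using 1 by (auto simp: max_def)
qed

lemma tip_pairs_Suc: "tip_pairs (Suc n) = tip_pairs n \<union> (\<lambda>a. (a, n)) ` {..<n}"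
  unfolding tip_pairs_def by auto

lemma finite_tip_pairs: "finite (tip_pairs n)"
proof -
  have "tip_pairs n \<subseteq> {..<n} \<times> {..<n}" unfolding tip_pairs_def by auto
  moreover have "finite ({..<n} \<times> {..<n})" by simp
  ultimately show ?thesis by (rule finite_subset)
qed

lemma sum_tip_pairs_Suc:
  "sum f (tip_pairs (Suc n)) = sum f (tip_pairs n) + (\<Sum>a<n. f (a, n))"
proof -
  have "sum f (tip_pairs (Suc n)) = sum f (tip_pairs n) + sum f ((\<lambda>a. (a, n)) ` {..<n})"
    unfolding tip_pairs_Suc
    by (rule sum.union_disjoint) (auto simp: finite_tip_pairs, auto simp: tip_pairs_def)
  also have "sum f ((\<lambda>a. (a, n)) ` {..<n}) = (\<Sum>a<n. f (a, n))"
    by (subst sum.reindex) (auto simp: inj_on_def)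
  finally show ?thesis .
qed

lemma card_tip_pairs: "real (card (tip_pairs n)) = real n * (real n - 1) / 2"
proof (induction n)
  case 0 then show ?case by (simp add: tip_pairs_def)
next
  case (Suc n)
  have "card (tip_pairs (Suc n)) = (\<Sum>p\<in>tip_pairs (Suc n). 1)" by simp
  also have "\<dots> = card (tip_pairs n) + n" by (subst sum_tip_pairs_Suc) simp
  finally show ?case using Suc by (simp add: field_simps)
qed

lemma double_sum_lemma:
  fixes h :: "nat \<Rightarrow> nat \<Rightarrow> real"
  shows "(\<Sum>m<n. \<Sum>a<n. if a = m then X else h (min a m) (max a m))
     = real n * X + 2 * (\<Sum>p\<in>tip_pairs n. h (fst p) (snd p))"
proof (induction n)
  case 0 then show ?case by (simp add: tip_pairs_def)
next
  case (Suc n)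
  have e1: "(\<Sum>m<n. (if n = m then X else h (min n m) (max n m))) = (\<Sum>a<n. h a n)"
    by (rule sum.cong) auto
  have e2: "(\<Sum>a<n. (if a = n then X else h (min a n) (max a n))) = (\<Sum>a<n. h a n)"
    by (rule sum.cong) auto
  show ?case
    by (simp add: sum.distrib sum_tip_pairs_Suc Suc e1 e2 algebra_simps)
qed

definition Fsum :: "nat \<Rightarrow> (nat \<Rightarrow> real) \<Rightarrow> real" where
  "Fsum n g = (\<Sum>c\<in>yule_choices n. \<Sum>p\<in>tip_pairs n. g (split_event c (fst p) (snd p)))"

lemma finite_yule_choices: "finite (yule_choices n)"
  unfolding yule_choices_def by (rule finite_PiE) auto

lemma card_yule_choices: "card (yule_choices n) = (\<Prod>k\<in>{1..<n}. k)"
  unfolding yule_choices_def by (subst card_PiE) auto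

lemma yule_choices_ne: "yule_choices n \<noteq> {}"
  unfolding yule_choices_def by (auto simp: PiE_eq_empty_iff lessThan_empty_iff)

lemma card_yule_choices_Suc:
  assumes "n \<ge> 1" shows "card (yule_choices (Suc n)) = n * card (yule_choices n)"
proof -
  have "{1..<Suc n} = insert n {1..<n}" using assms by auto
  then show ?thesis by (simp add: card_yule_choices mult.commute)
qed

lemma Fsum_Suc:
  assumes "n \<ge> 1"
  shows "Fsum (Suc n) g = real (n + 2) * Fsum n g + real n * real (card (yule_choices n)) * g n"
proof -
  let ?C = "yule_choices n"
  have ins: "{1..<Suc n} = insert n {1..<n}" using assms by auto
  have CS: "yule_choices (Suc n) = (\<lambda>(y, g). g(n := y)) ` ({..<n} \<times> ?C)"
    unfolding yule_choices_def ins by (subst PiE_insert_eq) simp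
  have inj: "inj_on (\<lambda>(y, g). g(n := y)) ({..<n} \<times> ?C)"
    unfolding yule_choices_def using inj_combinator[of n "{1..<n}" "\<lambda>k. {..<k}"] by simp
  define G where "G c = (\<Sum>p\<in>tip_pairs (Suc n). g (split_event c (fst p) (snd p)))" for c
  have "Fsum (Suc n) g = (\<Sum>x\<in>{..<n} \<times> ?C. G ((\<lambda>(y, g). g(n := y)) x))"
    unfolding Fsum_def G_def[symmetric] CS by (subst sum.reindex[OF inj]) (simp add: o_def)
  also have "\<dots> = (\<Sum>m<n. \<Sum>c\<in>?C. G (c(n := m)))"
    by (simp add: sum.cartesian_product case_prod_unfold)
  also have "\<dots> = (\<Sum>c\<in>?C. \<Sum>m<n. G (c(n := m)))" by (rule sum.swap)
  also have "\<dots> = (\<Sum>c\<in>?C. real (n + 2) * (\<Sum>p\<in>tip_pairs n. g (split_event c (fst p) (snd p))) + real n * g n)"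
  proof (rule sum.cong[OF refl])
    fix c assume c: "c \<in> ?C"
    have "G (c(n := m)) = (\<Sum>p\<in>tip_pairs n. g (split_event c (fst p) (snd p)))
       + (\<Sum>a<n. if a = m then g n else g (split_event c (min a m) (max a m)))" if m: "m < n" for m
    proof -
      have 1: "split_event (c(n := m)) (fst p) (snd p) = split_event c (fst p) (snd p)"
        if "p \<in> tip_pairs n" for p
        using that by (intro split_event_cong) (auto simp: tip_pairs_def)
      have 2: "split_event (c(n := m)) a n = (if a = m then n else split_event c (min a m) (max a m))"
        if "a < n" for a
      proof -
        have "split_event (c(n := m)) (min a m) (max a m) = split_event c (min a m) (max a m)"
          using that m by (intro split_event_cong) auto
        then show ?thesis using that m by (subst split_event.simps) auto
      qed
      show ?thesis unfolding G_def sum_tip_pairs_Suc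
        using 1 2 by (auto intro!: sum.cong)
    qed
    then have "(\<Sum>m<n. G (c(n := m))) = (\<Sum>m<n. (\<Sum>p\<in>tip_pairs n. g (split_event c (fst p) (snd p))))
       + (\<Sum>m<n. \<Sum>a<n. if a = m then g n else g (split_event c (min a m) (max a m)))"
      by (simp add: sum.distrib)
    also have "\<dots> = real n * (\<Sum>p\<in>tip_pairs n. g (split_event c (fst p) (snd p)))
        + (real n * g n + 2 * (\<Sum>p\<in>tip_pairs n. g (split_event c (fst p) (snd p))))"
      by (subst double_sum_lemma[where h = "\<lambda>a b. g (split_event c a b)"]) simp
    finally show "(\<Sum>m<n. G (c(n := m))) = real (n + 2) * (\<Sum>p\<in>tip_pairs n. g (split_event c (fst p) (snd p))) + real n * g n"
      by (simp add: algebra_simps)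
  qed
  also have "\<dots> = real (n + 2) * Fsum n g + real n * real (card ?C) * g n"
    unfolding Fsum_def by (simp add: sum.distrib sum_distrib_left)
  finally show ?thesis .
qed

lemma Hnr_Suc: "Hnr (Suc n) r = Hnr n r + 1 / real (Suc n) ^ r"
  unfolding Hnr_def by simp

lemma Hnr_1: "Hnr 1 r = 1" unfolding Hnr_def by simp

lemma alg:
  fixes x C a b :: real
  assumes "x \<ge> 1"
  shows "(x + 2) * (C * x / 2 * ((4 * x + 2) * b - 2 * a^2 - 4 * a)) + x * C * (b + a^2)
    = x * C * (x + 1) / 2 * ((4 * (x + 1) + 2) * (b + 1 / (x + 1)^2) - 2 * (a + 1 / (x + 1))^2 - 4 * (a + 1 / (x + 1)))"
proof -
  define y where "y = 1 / (x + 1)"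
  have hy: "y * (x + 1) = 1" using assms by (simp add: y_def)
  have e: "1 / (x + 1)^2 = y^2" by (simp add: y_def power_divide)
  have k: "(x + 1) * ((4 * (x + 1) + 2) * (b + y^2) - 2 * (a + y)^2 - 4 * (a + y))
      = (x + 1) * (4 * x + 6) * b - 2 * (x + 1) * a^2 - 4 * a * (x + 2)"
    using hy by algebra
  have "x * C * (x + 1) / 2 * ((4 * (x + 1) + 2) * (b + 1 / (x + 1)^2) - 2 * (a + 1 / (x + 1))^2 - 4 * (a + 1 / (x + 1)))
     = (x * C / 2) * ((x + 1) * ((4 * (x + 1) + 2) * (b + y^2) - 2 * (a + y)^2 - 4 * (a + y)))"
    unfolding e y_def[symmetric] by (simp only: mult.assoc times_divide_eq_left)
  also have "\<dots> = (x * C / 2) * ((x + 1) * (4 * x + 6) * b - 2 * (x + 1) * a^2 - 4 * a * (x + 2))"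
    unfolding k ..
  also have "\<dots> = (x + 2) * (C * x / 2 * ((4 * x + 2) * b - 2 * a^2 - 4 * a)) + x * C * (b + a^2)"
    by (simp add: algebra_simps power2_eq_square)
  finally show ?thesis ..
qed

lemma Fsum_closed:
  assumes "n \<ge> 1"
  shows "Fsum n (\<lambda>k. Hnr k 2 + (Hnr k 1)^2) = real (card (yule_choices n)) * real n / 2 *
     ((4 * real n + 2) * Hnr n 2 - 2 * (Hnr n 1)^2 - 4 * Hnr n 1)"
  using assms
proof (induction n rule: dec_induct)
  case base
  have "tip_pairs 1 = {}" by (auto simp: tip_pairs_def)
  then have "Fsum 1 (\<lambda>k. Hnr k 2 + (Hnr k 1)^2) = 0" unfolding Fsum_def by simp
  then show ?case by (simp only: Hnr_1) simp
next
  case (step n)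
  have n: "real n \<ge> 1" using step by simp
  show ?case
    unfolding Fsum_Suc[OF step(1)] step(3) card_yule_choices_Suc[OF step(1)] Hnr_Suc
    using alg[OF n, where C="real (card (yule_choices n))" and a="Hnr n 1" and b="Hnr n 2"]
    by (simp add: add.commute mult.assoc)
qed

lemma exp_moment:
  assumes l: "0 < l"
  shows "integrable (density lborel (exponential_density l)) (\<lambda>x. x ^ i)"
    and "integral\<^sup>L (density lborel (exponential_density l)) (\<lambda>x. x ^ i) = fact i / l ^ i"
proof -
  have hb: "has_bochner_integral lborel (\<lambda>x. exponential_density l x * x ^ i) (fact i / l ^ i)"
  proof (rule has_bochner_integral_nn_integral)
    show "(\<lambda>x. exponential_density l x * x ^ i) \<in> borel_measurable lborel" by measurable
    show "AE x in lborel. 0 \<le> exponential_density l x * x ^ i"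
      using l by (auto simp: erlang_density_def)
    show "0 \<le> fact i / l ^ i" using l by simp
    show "(\<integral>\<^sup>+ x. ennreal (exponential_density l x * x ^ i) \<partial>lborel) = ennreal (fact i / l ^ i)"
      using nn_integral_erlang_ith_moment[OF l, of 0 i] by simp
  qed
  have nn: "AE x in lborel. 0 \<le> exponential_density l x" using l by auto
  show "integrable (density lborel (exponential_density l)) (\<lambda>x. x ^ i)"
    by (subst integrable_density) (use hb nn in \<open>auto simp: has_bochner_integral_iff\<close>)
  show "integral\<^sup>L (density lborel (exponential_density l)) (\<lambda>x. x ^ i) = fact i / l ^ i"
    by (subst integral_density) (use hb nn in \<open>auto simp: has_bochner_integral_iff\<close>)
qed

lemma sigma_finite_exp: "sigma_finite_measure (density lborel (exponential_density (real i)))"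
proof (cases "i = 0")
  case True
  have "finite_measure (density lborel (exponential_density (real i)))"
  proof (rule finite_measureI)
    have "exponential_density (real i) = (\<lambda>_. 0)" by (auto simp: True erlang_density_def fun_eq_iff)
    then show "emeasure (density lborel (exponential_density (real i))) (space (density lborel (exponential_density (real i)))) \<noteq> \<infinity>"
      by (simp add: emeasure_density)
  qed
  then show ?thesis by (rule finite_measure.axioms(1))
next
  case False
  then have "prob_space (density lborel (exponential_density (real i)))"
    by (intro prob_space_exponential_density) simp
  then show ?thesis by (simp add: prob_space_imp_sigma_finite)
qed

interpretation EX: product_sigma_finite "\<lambda>i. density lborel (exponential_density (real i))"
  unfolding product_sigma_finite_def using sigma_finite_exp by blast

lemma exp_int_one:
  assumes "0 < l"
  shows "integrable (density lborel (exponential_density l)) (\<lambda>x. 1::real)"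
    "integral\<^sup>L (density lborel (exponential_density l)) (\<lambda>x. 1::real) = 1"
  using exp_moment[OF assms, of 0] by simp_all

lemma factor_int:
  assumes l: "l \<ge> 1"
  shows "integrable (density lborel (exponential_density (real l)))
           (\<lambda>x. (if l = i then x else 1) * (if l = j then x else 1))"
    "integral\<^sup>L (density lborel (exponential_density (real l)))
           (\<lambda>x. (if l = i then x else 1) * (if l = j then x else (1::real))) =
      (if l = i \<and> l = j then 2 / real l ^ 2 else if l = i \<or> l = j then 1 / real l else 1)"
proof -
  have lp: "0 < real l" using l by simp
  define D where "D = density lborel (exponential_density (real l))"
  have I1: "integrable D (\<lambda>x. x)" "integral\<^sup>L D (\<lambda>x. x) = 1 / real l"
    using exp_moment[OF lp, of 1] unfolding D_def by simp_all
  have I2: "integrable D (\<lambda>x. x ^ 2)" "integral\<^sup>L D (\<lambda>x. x ^ 2) = 2 / real l ^ 2"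
    using exp_moment[OF lp, of 2] unfolding D_def by (simp_all add: fact_2)
  have I0: "integrable D (\<lambda>x. 1::real)" "integral\<^sup>L D (\<lambda>x. 1::real) = 1"
    using exp_int_one[OF lp] unfolding D_def by simp_all
  have e: "(\<lambda>x. (if l = i then x else 1) * (if l = j then x else (1::real))) =
     (if l = i \<and> l = j then (\<lambda>x. x ^ 2) else if l = i \<or> l = j then (\<lambda>x. x) else (\<lambda>x. 1))"
    by (auto simp: fun_eq_iff power2_eq_square)
  show "integrable (density lborel (exponential_density (real l)))
           (\<lambda>x. (if l = i then x else 1) * (if l = j then x else 1))"
    unfolding D_def[symmetric] e using I0 I1 I2 by (simp split: if_split)
  show "integral\<^sup>L (density lborel (exponential_density (real l)))
           (\<lambda>x. (if l = i then x else 1) * (if l = j then x else (1::real))) =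
      (if l = i \<and> l = j then 2 / real l ^ 2 else if l = i \<or> l = j then 1 / real l else 1)"
    unfolding D_def[symmetric] e using I0 I1 I2 by (simp split: if_split)
qed

abbreviation M2 :: "nat \<Rightarrow> (nat \<Rightarrow> real) measure" where
  "M2 n \<equiv> PiM {1..n} (\<lambda>i. density lborel (exponential_density (real i)))"

lemma pair_moment:
  assumes "i \<in> {1..n}" "j \<in> {1..n}"
  shows "integrable (M2 n) (\<lambda>T. T i * T j)"
    "integral\<^sup>L (M2 n) (\<lambda>T. T i * T j) = (if i = j then 2 / real i ^ 2 else 1 / (real i * real j))"
proof -
  define f where "f l x = (if l = i then x else 1) * (if l = j then x else (1::real))" for l x
  have eq: "(\<Prod>l\<in>{1..n}. f l (T l)) = T i * T j" for T
    unfolding f_def prod.distrib using assms by (simp add: prod.delta)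
  have int: "integrable (density lborel (exponential_density (real l))) (f l)" if "l \<in> {1..n}" for l
    unfolding f_def using factor_int(1)[of l i j] that by simp
  show "integrable (M2 n) (\<lambda>T. T i * T j)"
  proof -
    have "integrable (M2 n) (\<lambda>x. \<Prod>l\<in>{1..n}. f l (x l))"
      by (rule EX.product_integrable_prod) (auto intro: int)
    then show ?thesis unfolding eq .
  qed
  have "integral\<^sup>L (M2 n) (\<lambda>T. T i * T j) = (\<Prod>l\<in>{1..n}. integral\<^sup>L (density lborel (exponential_density (real l))) (f l))"
    unfolding eq[symmetric] by (rule EX.product_integral_prod) (auto intro: int)
  also have "\<dots> = (\<Prod>l\<in>{1..n}. (if l = i \<and> l = j then 2 / real l ^ 2 else if l = i \<or> l = j then 1 / real l else 1))"
  proof (rule prod.cong[OF refl])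
    fix l assume "l \<in> {1..n}"
    then show "integral\<^sup>L (density lborel (exponential_density (real l))) (f l) =
      (if l = i \<and> l = j then 2 / real l ^ 2 else if l = i \<or> l = j then 1 / real l else 1)"
      unfolding f_def[abs_def] using factor_int(2)[of l i j] by simp
  qed
  also have "\<dots> = (if i = j then 2 / real i ^ 2 else 1 / (real i * real j))"
  proof (cases "i = j")
    case True
    have "(\<Prod>l\<in>{1..n}. (if l = i \<and> l = j then 2 / real l ^ 2 else if l = i \<or> l = j then 1 / real l else 1))
       = (\<Prod>l\<in>{1..n}. (if l = i then 2 / real l ^ 2 else 1))"
      by (rule prod.cong) (use True in auto)
    then show ?thesis using assms True by (simp add: prod.delta)
  next
    case False
    have "(\<Prod>l\<in>{1..n}. (if l = i \<and> l = j then 2 / real l ^ 2 else if l = i \<or> l = j then 1 / real l else 1))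
       = (\<Prod>l\<in>{1..n}. (if l = i then 1 / real l else 1) * (if l = j then 1 / real l else 1))"
      by (rule prod.cong) (use False in auto)
    also have "\<dots> = 1 / (real i * real j)"
      unfolding prod.distrib using assms by (simp add: prod.delta)
    finally show ?thesis using False by simp
  qed
  finally show "integral\<^sup>L (M2 n) (\<lambda>T. T i * T j) = (if i = j then 2 / real i ^ 2 else 1 / (real i * real j))" .
qed

lemma sq_sum_moment:
  assumes "k \<le> n"
  shows "integrable (M2 n) (\<lambda>T. (\<Sum>i\<in>{1..k}. T i)^2)"
    "integral\<^sup>L (M2 n) (\<lambda>T. (\<Sum>i\<in>{1..k}. T i)^2) = Hnr k 2 + (Hnr k 1)^2"
proof -
  have sq: "(\<Sum>i\<in>{1..k}. T i)^2 = (\<Sum>i\<in>{1..k}. \<Sum>j\<in>{1..k}. T i * T j)" for T :: "nat \<Rightarrow> real"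
    by (simp add: power2_eq_square sum_product)
  have ij: "i \<in> {1..n}" if "i \<in> {1..k}" for i using that assms by auto
  show "integrable (M2 n) (\<lambda>T. (\<Sum>i\<in>{1..k}. T i)^2)"
    unfolding sq
    apply (rule Bochner_Integration.integrable_sum)
    apply (rule Bochner_Integration.integrable_sum)
    apply (rule pair_moment(1))
    using ij apply auto
    done
  have "integral\<^sup>L (M2 n) (\<lambda>T. (\<Sum>i\<in>{1..k}. T i)^2)
     = (\<Sum>i\<in>{1..k}. \<Sum>j\<in>{1..k}. (if i = j then 2 / real i ^ 2 else 1 / (real i * real j)))"
  proof -
    have "integral\<^sup>L (M2 n) (\<lambda>T. \<Sum>i\<in>{1..k}. \<Sum>j\<in>{1..k}. T i * T j)
        = (\<Sum>i\<in>{1..k}. integral\<^sup>L (M2 n) (\<lambda>T. \<Sum>j\<in>{1..k}. T i * T j))"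
      by (rule Bochner_Integration.integral_sum, rule Bochner_Integration.integrable_sum, rule pair_moment(1)) (use assms in auto)
    also have "\<dots> = (\<Sum>i\<in>{1..k}. \<Sum>j\<in>{1..k}. integral\<^sup>L (M2 n) (\<lambda>T. T i * T j))"
      by (rule sum.cong[OF refl], rule Bochner_Integration.integral_sum, rule pair_moment(1)) (use assms in auto)
    also have "\<dots> = (\<Sum>i\<in>{1..k}. \<Sum>j\<in>{1..k}. (if i = j then 2 / real i ^ 2 else 1 / (real i * real j)))"
      by (rule sum.cong[OF refl], rule sum.cong[OF refl], rule pair_moment(2)) (use assms in auto)
    finally show ?thesis unfolding sq .
  qed
  also have "\<dots> = (\<Sum>i\<in>{1..k}. \<Sum>j\<in>{1..k}. 1 / (real i * real j) + (if i = j then 1 / real i ^ 2 else 0))"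
    by (intro sum.cong refl) (auto simp: power2_eq_square)
  also have "\<dots> = (\<Sum>i\<in>{1..k}. \<Sum>j\<in>{1..k}. 1 / (real i * real j)) + (\<Sum>i\<in>{1..k}. 1 / real i ^ 2)"
    by (simp add: sum.distrib)
  also have "\<dots> = Hnr k 2 + (Hnr k 1)^2"
    unfolding Hnr_def by (simp add: power2_eq_square sum_product)
  finally show "integral\<^sup>L (M2 n) (\<lambda>T. (\<Sum>i\<in>{1..k}. T i)^2) = Hnr k 2 + (Hnr k 1)^2" .
qed

lemma height_minus_coal:
  assumes "k \<le> n"
  shows "yule_height n T - coal_time n k T = (\<Sum>i\<in>{1..k}. T i)"
proof -
  have "{1..n} = {1..k} \<union> {k<..n}" using assms by auto
  then have "yule_height n T = (\<Sum>i\<in>{1..k}. T i) + coal_time n k T"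
    unfolding yule_height_def coal_time_def by (simp add: sum.union_disjoint ivl_disj_int)
  then show ?thesis by simp
qed

lemma Hnr_nonneg: "0 \<le> Hnr k r"
  unfolding Hnr_def by (intro sum_nonneg) simp

lemma ratio_lemma:
  fixes c m R :: real
  assumes "c > 0" "m - 1 > 0" "m > 0"
  shows "c * m / 2 * R / (c * (m * (m - 1) / 2)) = R / (m - 1)"
  using assms by (simp add: field_simps)

theorem lemmaY4p1:
  fixes n :: nat
  assumes "n \<ge> 2"
  shows "(\<integral>\<omega>. (case \<omega> of ((c, (a, b)), T) \<Rightarrow>
            (yule_height n T - coal_time n (split_event c a b) T) ^ 2) \<partial>(yule_space n))
         = (4 * real n + 2) / (real n - 1) * Hnr n 2
           - 2 * (Hnr n 1) ^ 2 / (real n - 1)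
           - 4 * Hnr n 1 / (real n - 1)"
proof -
  define A where "A = yule_choices n \<times> tip_pairs n"
  define M1 where "M1 = measure_pmf (pmf_of_set A)"
  define f where "f = (\<lambda>\<omega>. (case \<omega> of ((c, (a, b)), T) \<Rightarrow>
            (yule_height n T - coal_time n (split_event c a b) T) ^ 2))"
  define \<kappa> where "\<kappa> x = split_event (fst x) (fst (snd x)) (snd (snd x))" for x :: "(nat \<Rightarrow> nat) \<times> nat \<times> nat"
  define h where "h k T = (yule_height n T - coal_time n k T) ^ 2" for k T
  define G where "G k = Hnr k 2 + (Hnr k 1)^2" for k
  have G_nn: "0 \<le> G k" for k unfolding G_def using Hnr_nonneg[of k 2] by simp
  have finA: "finite A" unfolding A_def by (simp add: finite_yule_choices finite_tip_pairs)
  have "(0, 1) \<in> tip_pairs n" using assms by (simp add: tip_pairs_def)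
  then have neA: "A \<noteq> {}" unfolding A_def using yule_choices_ne by auto
  have ys: "yule_space n = M1 \<Otimes>\<^sub>M M2 n" unfolding yule_space_def M1_def A_def ..
  have f_eq: "f = (\<lambda>\<omega>. h (\<kappa> (fst \<omega>)) (snd \<omega>))"
    by (auto simp: fun_eq_iff f_def h_def \<kappa>_def split: prod.splits)
  have ps: "prob_space (M2 n)"
    by (rule prob_space_PiM, rule prob_space_exponential_density) auto
  then interpret M2: prob_space "M2 n" .
  have meas_h: "(\<lambda>\<omega>. h k (snd \<omega>)) \<in> borel_measurable (M1 \<Otimes>\<^sub>M M2 n)" for k
    unfolding h_def yule_height_def coal_time_def by measurable
  have meas_k: "(\<lambda>\<omega>. \<kappa> (fst \<omega>)) \<in> measurable (M1 \<Otimes>\<^sub>M M2 n) (count_space UNIV)"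
  proof (rule measurable_compose[OF measurable_fst])
    show "\<kappa> \<in> measurable M1 (count_space UNIV)"
      unfolding M1_def by (subst measurable_cong_sets[OF sets_measure_pmf_count_space refl]) simp
  qed
  have meas_f: "f \<in> borel_measurable (M1 \<Otimes>\<^sub>M M2 n)"
    unfolding f_eq by (rule measurable_compose_countable'[OF meas_h meas_k]) auto
  have f_nn: "0 \<le> f \<omega>" for \<omega> by (auto simp: f_def split: prod.splits)
  have inner: "(\<integral>\<^sup>+ T. ennreal (f (x, T)) \<partial>M2 n) = ennreal (G (\<kappa> x))" if x: "x \<in> A" for x
  proof -
    have "\<kappa> x \<le> n" using x split_event_le[of "fst x" "fst (snd x)" "snd (snd x)"]
      by (auto simp: A_def tip_pairs_def \<kappa>_def)
    then have fx: "f (x, T) = (\<Sum>i\<in>{1..\<kappa> x}. T i)^2" for T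
      using height_minus_coal[of "\<kappa> x" n T] by (simp add: f_eq h_def)
    show ?thesis unfolding fx
      using \<open>\<kappa> x \<le> n\<close> sq_sum_moment[of "\<kappa> x" n]
      by (subst nn_integral_eq_integral) (auto simp: G_def)
  qed
  have "(\<integral>\<^sup>+ \<omega>. ennreal (f \<omega>) \<partial>(M1 \<Otimes>\<^sub>M M2 n)) = (\<integral>\<^sup>+ x. \<integral>\<^sup>+ T. ennreal (f (x, T)) \<partial>M2 n \<partial>M1)"
    by (rule M2.nn_integral_fst[symmetric]) (use meas_f in measurable)
  also have "\<dots> = (\<Sum>x\<in>A. \<integral>\<^sup>+ T. ennreal (f (x, T)) \<partial>M2 n) / card A"
    unfolding M1_def by (rule nn_integral_pmf_of_set[OF neA finA])
  also have "\<dots> = (\<Sum>x\<in>A. ennreal (G (\<kappa> x))) / ennreal (real (card A))"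
    using inner by (simp add: ennreal_of_nat_eq_real_of_nat)
  also have "\<dots> = ennreal ((\<Sum>x\<in>A. G (\<kappa> x)) / real (card A))"
    using finA neA by (subst sum_ennreal) (auto simp: G_nn card_gt_0_iff intro!: divide_ennreal sum_nonneg)
  finally have nn: "(\<integral>\<^sup>+ \<omega>. ennreal (f \<omega>) \<partial>(M1 \<Otimes>\<^sub>M M2 n)) = ennreal ((\<Sum>x\<in>A. G (\<kappa> x)) / real (card A))" .
  have "has_bochner_integral (M1 \<Otimes>\<^sub>M M2 n) f ((\<Sum>x\<in>A. G (\<kappa> x)) / real (card A))"
    by (rule has_bochner_integral_nn_integral[OF meas_f _ _ nn])
       (auto simp: f_nn G_nn intro!: divide_nonneg_nonneg sum_nonneg)
  then have I: "integral\<^sup>L (yule_space n) f = (\<Sum>x\<in>A. G (\<kappa> x)) / real (card A)"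
    unfolding ys by (rule has_bochner_integral_integral_eq)
  have S: "(\<Sum>x\<in>A. G (\<kappa> x)) = Fsum n G"
    unfolding A_def Fsum_def \<kappa>_def sum.cartesian_product by (simp add: split_def)
  have cA: "real (card A) = real (card (yule_choices n)) * (real n * (real n - 1) / 2)"
    unfolding A_def by (simp add: card_cartesian_product card_tip_pairs)
  have cpos: "real (card (yule_choices n)) > 0"
    using finite_yule_choices yule_choices_ne by (simp add: card_gt_0_iff)
  have n1: "real n - 1 > 0" "real n > 0" using assms by auto
  have FC: "Fsum n G = real (card (yule_choices n)) * real n / 2 *
     ((4 * real n + 2) * Hnr n 2 - 2 * (Hnr n 1)^2 - 4 * Hnr n 1)"
    unfolding G_def[abs_def] by (rule Fsum_closed) (use assms in simp)
  have X: "Fsum n G / real (card A) = ((4 * real n + 2) * Hnr n 2 - 2 * (Hnr n 1)^2 - 4 * Hnr n 1) / (real n - 1)"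
    unfolding FC cA using cpos n1 by (rule ratio_lemma)
  have Y: "(4 * real n + 2) / (real n - 1) * Hnr n 2 - 2 * (Hnr n 1) ^ 2 / (real n - 1) - 4 * Hnr n 1 / (real n - 1)
      = ((4 * real n + 2) * Hnr n 2 - 2 * (Hnr n 1)^2 - 4 * Hnr n 1) / (real n - 1)"
    by (simp only: diff_divide_distrib times_divide_eq_left)
  show ?thesis
    unfolding f_def[symmetric] I S X Y ..
qed

end
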